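(* Let $(E,\mathcal{D},\rho)$ and $(E,\mathcal{D},\phi)$ be U-matroids on the same lattice such that $\phi$ dominates $\rho$ (i.e., $\phi(S)\ge\rho(S)$ for all $S\in\mathcal{D}$), and let $a\in E$ with $\{a\}\notin\mathcal{D}$. Then the generous atom extension $\phi_a$ of $\phi$ to $\mathcal{D}[a]$ dominates every lattice extension of $\rho$ to $\mathcal{D}[a]$; that is, if $(E,\mathcal{D}[a],\rho')$ is a U-matroid with $\rho'|_\mathcal{D}=\rho$, then $\phi_a(S)\ge\rho'(S)$ for all $S\in\mathcal{D}[a]$.
   Context: An accessible distributive lattice on a finite set $E$ is a family $\mathcal{D}\subseteq 2^E$ containing $\emptyset$ and $E$, closed under union and intersection, such that every nonempty $A\in\mathcal{D}$ contains some $x$ with $A\setminus\{x\}\in\mathcal{D}$. A U-matroid is a triple $(E,\mathcal{D},\rho)$ with $\mathcal{D}$ an accessible distributive lattice and $\rho:\mathcal{D}\to\mathbb{N}$ satisfying $\rho(\emptyset)=0$; $\rho(A)\le\rho(B)$ whenever $A\subseteq B$; $\rho(A)+\rho(B)\ge\rho(A\cup B)+\rho(A\cap B)$; and $\rho(A\cup\{e\})-\rho(A)\le1$ whenever $A,A\cup\{e\}\in\mathcal{D}$. For $S\subseteq E$, $\sup_\mathcal{D}(S)=\bigcap\{B\in\mathcal{D}:B\supseteq S\}$. For $a\in E$ with $\{a\}\notin\mathcal{D}$, let $\mathcal{D}[a]=\mathcal{D}\cup\{S\cup\{a\}:S\in\mathcal{D}\}$. The generous atom extension $\phi_a:\mathcal{D}[a]\to\mathbb{N}$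 of $\phi$ is: $\phi_a(S)=\phi(S)$ if $S\in\mathcal{D}$; if $S\notin\mathcal{D}$ (so $S\setminus\{a\}\in\mathcal{D}$), $\phi_a(S)=\phi(S\setminus\{a\})$ when $\phi(S\setminus\{a\})=\phi(\sup_\mathcal{D}(S))$, and $\phi_a(S)=\phi(S\setminus\{a\})+1$ otherwise. *)

theory Defs
  imports Main
begin

definition accessible_distributive_lattice :: "'a set \<Rightarrow> 'a set set \<Rightarrow> bool" where
  "accessible_distributive_lattice E D \<longleftrightarrow>
     finite E \<and> D \<subseteq> Pow E \<and> {} \<in> D \<and> E \<in> D \<and>
     (\<forall>A\<in>D. \<forall>B\<in>D. A \<union> B \<in> D \<and> A \<inter> B \<in> D) \<and>
     (\<forall>A\<in>D. A \<noteq> {} \<longrightarrow> (\<exists>x\<in>A. A - {x} \<in> D))"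

definition U_matroid :: "'a set \<Rightarrow> 'a set set \<Rightarrow> ('a set \<Rightarrow> nat) \<Rightarrow> bool" where
  "U_matroid E D \<rho> \<longleftrightarrow>
     accessible_distributive_lattice E D \<and>
     \<rho> {} = 0 \<and>
     (\<forall>A\<in>D. \<forall>B\<in>D. A \<subseteq> B \<longrightarrow> \<rho> A \<le> \<rho> B) \<and>
     (\<forall>A\<in>D. \<forall>B\<in>D. \<rho> A + \<rho> B \<ge> \<rho> (A \<union> B) + \<rho> (A \<inter> B)) \<and>
     (\<forall>A\<in>D. \<forall>e. insert e A \<in> D \<longrightarrow> \<rho> (insert e A) \<le> \<rho> A + 1)"

definition sup_lat :: "'a set set \<Rightarrow> 'a set \<Rightarrow> 'a set" where
  "sup_lat D S = \<Inter> {B \<in> D. S \<subseteq> B}"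

definition atom_ext :: "'a set set \<Rightarrow> 'a \<Rightarrow> 'a set set" where
  "atom_ext D a = D \<union> {insert a S | S. S \<in> D}"

definition generous_ext :: "'a set set \<Rightarrow> ('a set \<Rightarrow> nat) \<Rightarrow> 'a \<Rightarrow> 'a set \<Rightarrow> nat" where
  "generous_ext D \<phi> a S =
     (if S \<in> D then \<phi> S
      else if \<phi> (S - {a}) = \<phi> (sup_lat D S) then \<phi> (S - {a})
      else \<phi> (S - {a}) + 1)"

end

theory Submission
  imports Defs
begin

lemma inter_closed:
  assumes "finite F" "F \<noteq> {}" "F \<subseteq> D" "\<forall>A\<in>D. \<forall>B\<in>D. A \<union> B \<in> D \<and> A \<inter> B \<in> D"
  shows "\<Inter>F \<in> D"
  using assms
proof (induction F rule: finite_ne_induct)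
  case (singleton x) then show ?case by simp
next
  case (insert x F) then show ?case by simp
qed

theorem proposition4p11:
  fixes E :: "'a set" and D :: "'a set set" and \<rho> \<phi> \<rho>' :: "'a set \<Rightarrow> nat" and a :: 'a
  assumes "U_matroid E D \<rho>"
    and "U_matroid E D \<phi>"
    and "\<forall>S\<in>D. \<rho> S \<le> \<phi> S"
    and "a \<in> E"
    and "{a} \<notin> D"
    and "U_matroid E (atom_ext D a) \<rho>'"
    and "\<forall>S\<in>D. \<rho>' S = \<rho> S"
  shows "\<forall>S\<in>atom_ext D a. \<rho>' S \<le> generous_ext D \<phi> a S"
proof
  fix S assume S: "S \<in> atom_ext D a"
  have adl: "accessible_distributive_lattice E D" using assms(1) unfolding U_matroid_def by blast
  have DsubA: "D \<subseteq> atom_ext D a" unfolding atom_ext_def by blast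
  show "\<rho>' S \<le> generous_ext D \<phi> a S"
  proof (cases "S \<in> D")
    case True then show ?thesis using assms(3,7) by (simp add: generous_ext_def)
  next
    case False
    then obtain T where T: "T \<in> D" "S = insert a T" using S unfolding atom_ext_def by blast
    have aT: "a \<notin> T" using T False by (metis insert_absorb)
    have ST: "S - {a} = T" using T aT by simp
    define F where "F = {B \<in> D. S \<subseteq> B}"
    have TE: "T \<subseteq> E" using T adl unfolding accessible_distributive_lattice_def by blast
    have EF: "E \<in> F" using adl TE T assms(4) unfolding F_def accessible_distributive_lattice_def by blast
    have finF: "finite F"
    proof -
      have "F \<subseteq> Pow E" using adl unfolding F_def accessible_distributive_lattice_def by blast
      moreover have "finite (Pow E)" using adl unfolding accessible_distributive_lattice_def by simp
      ultimately show ?thesis by (rule finite_subset)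
    qed
    have UD: "sup_lat D S \<in> D" unfolding sup_lat_def F_def[symmetric]
      by (rule inter_closed[OF finF]) (use EF adl in \<open>auto simp: F_def accessible_distributive_lattice_def\<close>)
    have SU: "S \<subseteq> sup_lat D S" unfolding sup_lat_def by blast
    have mono': "\<rho>' S \<le> \<rho>' (sup_lat D S)"
    proof -
      have m: "\<forall>A\<in>atom_ext D a. \<forall>B\<in>atom_ext D a. A \<subseteq> B \<longrightarrow> \<rho>' A \<le> \<rho>' B"
        using assms(6) unfolding U_matroid_def by (elim conjE)
      have "sup_lat D S \<in> atom_ext D a" using UD DsubA by (rule subsetD[rotated])
      then show ?thesis using m S SU by blast
    qed
    have unit: "\<rho>' S \<le> \<rho>' T + 1"
    proof -
      have m: "\<forall>A\<in>atom_ext D a. \<forall>e. insert e A \<in> atom_ext D a \<longrightarrow> \<rho>' (insert e A) \<le> \<rho>' A + 1"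
        using assms(6) unfolding U_matroid_def by (elim conjE)
      have "T \<in> atom_ext D a" using T(1) DsubA by (rule subsetD[rotated])
      then show ?thesis using m S T(2) by blast
    qed
    have r1: "\<rho>' T = \<rho> T" "\<rho> T \<le> \<phi> T" using T assms(3,7) by auto
    have r2: "\<rho>' (sup_lat D S) = \<rho> (sup_lat D S)" "\<rho> (sup_lat D S) \<le> \<phi> (sup_lat D S)"
      using UD assms(3,7) by auto
    show ?thesis
    proof (cases "\<phi> T = \<phi> (sup_lat D S)")
      case True
      then show ?thesis using False ST mono' r2 by (simp add: generous_ext_def)
    next
      case c: False
      then show ?thesis using False ST unit r1 by (simp add: generous_ext_def)
    qed
  qed
qed

end
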